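(* Let $n\ge 3$ and $a,c>0$. Let $\Gamma'$ be the wheel on $n+1$ vertices: vertices $1,\dots,n$ form a cycle ($i$ joined to $i+1$, indices modulo $n$) with all conductances $c$, and vertex $n+1$ is joined to every vertex $1,\dots,n$ with conductance $a$. Put $q=\frac{a}{2c}+1$. Then $$K(\Gamma')=-\frac{1}{2c}\,\frac{n+1}{T_n(q)-1}\left[\left(\frac{an}{6c}-n+1\right)U_{n-1}(q)+\left(\frac{2c}{a}+\frac{n}{3}\right)\bigl(V_{n-1}(q)-1\bigr)\right]+\frac{1}{a}+\frac{n(n+1)}{6c}.$$
   Context: For a network with vertex set $\{1,\dots,N\}$ and conductances $c_{ij}>0$ on its edges, the Laplacian is the matrix $L$ with $L_{ii}=\sum_k c_{ik}$, $L_{ij}=-c_{ij}$ ($i\neq j$, $c_{ij}=0$ for non-edges). With $G'$ the group inverse of the Laplacian of $\Gamma'$, the effective resistance is $R(i,j)=G'_{ii}+G'_{jj}-2G'_{ij}$ and the Kirchhoff index is $K(\Gamma')=\frac12\sum_{i,j}R(i,j)$. $T_k,U_k$ are the Chebyshev polynomials of the first and second kind ($T_0=1,T_1=x,U_0=1,U_1=2x$, recurrence $p_{k+1}=2xp_k-p_{k-1}$) and $V_k$ those of the third kind ($V_0=1$, $V_1=2x-1$, $V_{k+1}=2xV_k-V_{k-1}$). *)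

theory Defs
  imports Complex_Main
begin

fun cheb_T :: "nat \<Rightarrow> real \<Rightarrow> real" where
  "cheb_T 0 x = 1"
| "cheb_T (Suc 0) x = x"
| "cheb_T (Suc (Suc k)) x = 2 * x * cheb_T (Suc k) x - cheb_T k x"

fun cheb_U :: "nat \<Rightarrow> real \<Rightarrow> real" where
  "cheb_U 0 x = 1"
| "cheb_U (Suc 0) x = 2 * x"
| "cheb_U (Suc (Suc k)) x = 2 * x * cheb_U (Suc k) x - cheb_U k x"

fun cheb_V :: "nat \<Rightarrow> real \<Rightarrow> real" where
  "cheb_V 0 x = 1"
| "cheb_V (Suc 0) x = 2 * x - 1"
| "cheb_V (Suc (Suc k)) x = 2 * x * cheb_V (Suc k) x - cheb_V k x"

text \<open>Networks on the vertex set {1..N}: conductance function cnd (cnd i j = 0 for non-edges).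
  Matrices indexed by {1..N} are represented as functions nat => nat => real.\<close>

definition laplacian :: "nat \<Rightarrow> (nat \<Rightarrow> nat \<Rightarrow> real) \<Rightarrow> nat \<Rightarrow> nat \<Rightarrow> real" where
  "laplacian N cnd i j = (if i = j then (\<Sum>k\<in>{1..N}. cnd i k) else - cnd i j)"

definition matmul :: "nat \<Rightarrow> (nat \<Rightarrow> nat \<Rightarrow> real) \<Rightarrow> (nat \<Rightarrow> nat \<Rightarrow> real) \<Rightarrow> nat \<Rightarrow> nat \<Rightarrow> real" where
  "matmul N A B i j = (\<Sum>k\<in>{1..N}. A i k * B k j)"

definition is_group_inverse :: "nat \<Rightarrow> (nat \<Rightarrow> nat \<Rightarrow> real) \<Rightarrow> (nat \<Rightarrow> nat \<Rightarrow> real) \<Rightarrow> bool" where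
  "is_group_inverse N L G \<longleftrightarrow>
     (\<forall>i\<in>{1..N}. \<forall>j\<in>{1..N}.
        matmul N (matmul N L G) L i j = L i j \<and>
        matmul N (matmul N G L) G i j = G i j \<and>
        matmul N L G i j = matmul N G L i j) \<and>
     (\<forall>i j. (i \<notin> {1..N} \<or> j \<notin> {1..N}) \<longrightarrow> G i j = 0)"

definition group_inverse :: "nat \<Rightarrow> (nat \<Rightarrow> nat \<Rightarrow> real) \<Rightarrow> nat \<Rightarrow> nat \<Rightarrow> real" where
  "group_inverse N L = (THE G. is_group_inverse N L G)"

definition eff_resistance :: "nat \<Rightarrow> (nat \<Rightarrow> nat \<Rightarrow> real) \<Rightarrow> nat \<Rightarrow> nat \<Rightarrow> real" where
  "eff_resistance N cnd i j =
     (let G = group_inverse N (laplacian N cnd) in G i i + G j j - 2 * G i j)"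

definition kirchhoff_index :: "nat \<Rightarrow> (nat \<Rightarrow> nat \<Rightarrow> real) \<Rightarrow> real" where
  "kirchhoff_index N cnd = (1/2) * (\<Sum>i\<in>{1..N}. \<Sum>j\<in>{1..N}. eff_resistance N cnd i j)"

definition wheel_cond :: "nat \<Rightarrow> real \<Rightarrow> real \<Rightarrow> nat \<Rightarrow> nat \<Rightarrow> real" where
  "wheel_cond n a c i j =
     (if i \<in> {1..n} \<and> j \<in> {1..n} \<and> (j = i mod n + 1 \<or> i = j mod n + 1) then c
      else if (i = n + 1 \<and> j \<in> {1..n}) \<or> (j = n + 1 \<and> i \<in> {1..n}) then a
      else 0)"

end

theory Submission
  imports Defs
begin


lemma cheb_T_mono:
  assumes "q > 1"
  shows "cheb_T k q \<ge> 1 \<and> cheb_T (Suc k) q > cheb_T k q"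
proof (induction k)
  case 0 then show ?case using assms by simp
next
  case (Suc k)
  have "cheb_T (Suc (Suc k)) q - cheb_T (Suc k) q
        = 2*(q-1)*cheb_T (Suc k) q + (cheb_T (Suc k) q - cheb_T k q)" by (simp add: algebra_simps)
  moreover have "2*(q-1)*cheb_T (Suc k) q > 0" using Suc assms by simp
  ultimately show ?case using Suc by linarith
qed

lemma cheb_TV: "cheb_T (Suc m) q - cheb_V m q = (q-1) * cheb_U m q"
proof (induction m q rule: cheb_U.induct)
  case (1 x) then show ?case by simp
next
  case (2 x) then show ?case by (simp add: algebra_simps)
next
  case (3 k x)
  have "cheb_T (Suc (Suc (Suc k))) x - cheb_V (Suc (Suc k)) x
     = 2*x*(cheb_T (Suc (Suc k)) x - cheb_V (Suc k) x) - (cheb_T (Suc k) x - cheb_V k x)"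
    by (simp add: algebra_simps)
  also have "\<dots> = (x-1) * cheb_U (Suc (Suc k)) x" unfolding 3 by (simp add: algebra_simps)
  finally show ?case .
qed

definition Wf :: "real \<Rightarrow> nat \<Rightarrow> real" where
  "Wf q k = (if k = 0 then 0 else cheb_U (k - 1) q)"

lemma Wf_rec: "Wf q (Suc (Suc m)) = 2 * q * Wf q (Suc m) - Wf q m"
  by (cases m) (auto simp: Wf_def)

lemma Wf_0[simp]: "Wf q 0 = 0" and Wf_1[simp]: "Wf q (Suc 0) = 1"
  by (auto simp: Wf_def)

lemma Wf_diff: "Wf q (Suc (Suc m)) - Wf q m = 2 * cheb_T (Suc m) q"
proof (induction m q rule: cheb_U.induct)
  case (1 x) then show ?case by (simp add: Wf_def)
next
  case (2 x) then show ?case by (simp add: Wf_def)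
next
  case (3 k x)
  have "Wf x (Suc (Suc (Suc (Suc k)))) - Wf x (Suc (Suc k))
    = 2*x*(Wf x (Suc (Suc (Suc k))) - Wf x (Suc k)) - (Wf x (Suc (Suc k)) - Wf x k)"
    by (simp only: Wf_rec) (simp add: algebra_simps)
  also have "\<dots> = 2 * cheb_T (Suc (Suc (Suc k))) x" unfolding 3 by (simp add: algebra_simps)
  finally show ?case .
qed



lemma matmul_assoc: "matmul N (matmul N A B) C i j = matmul N A (matmul N B C) i j"
  unfolding matmul_def
  by (simp add: sum_distrib_left sum_distrib_right mult.assoc) (rule sum.swap)

definition eqR :: "nat \<Rightarrow> (nat \<Rightarrow> nat \<Rightarrow> real) \<Rightarrow> (nat \<Rightarrow> nat \<Rightarrow> real) \<Rightarrow> bool" where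
  "eqR N A B \<longleftrightarrow> (\<forall>i\<in>{1..N}. \<forall>j\<in>{1..N}. A i j = B i j)"

lemma eqR_sym: "eqR N A B \<Longrightarrow> eqR N B A" by (auto simp: eqR_def)
lemma eqR_trans[trans]: "eqR N A B \<Longrightarrow> eqR N B C \<Longrightarrow> eqR N A C" by (auto simp: eqR_def)
lemma eqR_refl: "eqR N A A" by (auto simp: eqR_def)

lemma eqR_cong: "eqR N A A' \<Longrightarrow> eqR N B B' \<Longrightarrow> eqR N (matmul N A B) (matmul N A' B')"
  unfolding eqR_def matmul_def by (auto intro!: sum.cong)

lemma assocR: "eqR N (matmul N (matmul N A B) C) (matmul N A (matmul N B C))"
  by (simp add: eqR_def matmul_assoc)

lemma group_inverse_unique:
  assumes X: "is_group_inverse N L X" and Y: "is_group_inverse N L Y"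
  shows "X = Y"
proof -
  let ?m = "matmul N"
  have X1: "eqR N (?m (?m L X) L) L" and X2: "eqR N (?m (?m X L) X) X" and X3: "eqR N (?m L X) (?m X L)"
    using X by (auto simp: is_group_inverse_def eqR_def)
  have Y1: "eqR N (?m (?m L Y) L) L" and Y2: "eqR N (?m (?m Y L) Y) Y" and Y3: "eqR N (?m L Y) (?m Y L)"
    using Y by (auto simp: is_group_inverse_def eqR_def)
  have LX: "eqR N (?m L X) (?m Y L)"
  proof -
    have "eqR N (?m L X) (?m (?m (?m L Y) L) X)" by (rule eqR_cong[OF eqR_sym[OF Y1] eqR_refl])
    also have "eqR N \<dots> (?m (?m L Y) (?m L X))" by (rule assocR)
    also have "eqR N \<dots> (?m (?m Y L) (?m X L))" by (rule eqR_cong[OF Y3 X3])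
    also have "eqR N \<dots> (?m Y (?m L (?m X L)))" by (rule assocR)
    also have "eqR N \<dots> (?m Y (?m (?m L X) L))" by (rule eqR_cong[OF eqR_refl eqR_sym[OF assocR]])
    also have "eqR N \<dots> (?m Y L)" by (rule eqR_cong[OF eqR_refl X1])
    finally show ?thesis .
  qed
  have "eqR N X Y"
  proof -
    have "eqR N X (?m (?m X L) X)" by (rule eqR_sym[OF X2])
    also have "eqR N \<dots> (?m X (?m L X))" by (rule assocR)
    also have "eqR N \<dots> (?m X (?m L Y))" by (rule eqR_cong[OF eqR_refl eqR_trans[OF LX eqR_sym[OF Y3]]])
    also have "eqR N \<dots> (?m (?m X L) Y)" by (rule eqR_sym[OF assocR])
    also have "eqR N \<dots> (?m (?m Y L) Y)" by (rule eqR_cong[OF eqR_trans[OF eqR_sym[OF X3] LX] eqR_refl])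
    also have "eqR N \<dots> Y" by (rule Y2)
    finally show ?thesis .
  qed
  moreover have "\<forall>i j. (i \<notin> {1..N} \<or> j \<notin> {1..N}) \<longrightarrow> X i j = 0 \<and> Y i j = 0"
    using X Y by (auto simp: is_group_inverse_def)
  ultimately show ?thesis unfolding eqR_def by (metis ext)
qed



lemma lap_row:
  assumes "i \<in> {1..N}" "cnd i i = 0"
  shows "(\<Sum>k\<in>{1..N}. laplacian N cnd i k * X k) = (\<Sum>m\<in>{1..N}. cnd i m) * X i - (\<Sum>k\<in>{1..N}. cnd i k * X k)"
proof -
  have "(\<Sum>k\<in>{1..N}. laplacian N cnd i k * X k) = (\<Sum>k\<in>{1..N}. (if i = k then (\<Sum>m\<in>{1..N}. cnd i m) * X k else 0) - cnd i k * X k)"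
    by (rule sum.cong) (auto simp: laplacian_def assms)
  also have "\<dots> = (\<Sum>m\<in>{1..N}. cnd i m) * X i - (\<Sum>k\<in>{1..N}. cnd i k * X k)"
    using assms(1) by (simp add: sum_subtractf sum.delta)
  finally show ?thesis .
qed

lemma P_row:
  assumes "i \<in> {1..N}"
  shows "(\<Sum>k\<in>{1..N}. ((if i = k then 1 else 0) - 1 / real N) * X k) = X i - (\<Sum>k\<in>{1..N}. X k) / real N"
proof -
  have "(\<Sum>k\<in>{1..N}. ((if i = k then 1 else 0) - 1 / real N) * X k) = (\<Sum>k\<in>{1..N}. (if i = k then X k else 0) - X k / real N)"
    by (rule sum.cong) (auto simp: left_diff_distrib)
  also have "\<dots> = X i - (\<Sum>k\<in>{1..N}. X k) / real N"
    using assms by (simp add: sum_subtractf sum.delta sum_divide_distrib)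
  finally show ?thesis .
qed

locale wh =
  fixes n :: nat and a c q :: real
  assumes n3: "n \<ge> 3" and apos: "a > 0" and cpos: "c > 0" and qdef: "q = a / (2 * c) + 1"
begin

abbreviation "w \<equiv> wheel_cond n a c"
definition "sc i = (if i = n then 1 else Suc i)"
definition "pr i = (if i = 1 then n else i - 1)"
definition "ds i j = (if j \<le> i then i - j else j - (i::nat))"
definition "ff d = Wf q d + Wf q (n - d)"
definition "TT = cheb_T n q"
definition "\<beta> = 1 / (2 * c * (TT - 1))"
definition "hh = - 1 / (a * (real n + 1)^2)"
definition "ee = real n / (a * (real n + 1)^2)"
definition "\<kappa> = - (real n + 2) / (a * (real n + 1)^2)"
definition "G i j = (if i \<in> {1..n} \<and> j \<in> {1..n} then \<beta> * ff (ds i j) + \<kappa>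
   else if (i \<in> {1..n} \<and> j = n + 1) \<or> (i = n + 1 \<and> j \<in> {1..n}) then hh
   else if i = n + 1 \<and> j = n + 1 then ee else 0)"
definition "P i j = (if i = j then 1 else 0) - 1 / real (n + 1)"

lemma q1: "q > 1" using apos cpos qdef by simp
lemma acq: "a = 2 * c * (q - 1)" using cpos qdef by (simp add: field_simps)
lemma TT1: "TT > 1"
proof -
  have "cheb_T (Suc (n - 1)) q > cheb_T (n - 1) q" "cheb_T (n - 1) q \<ge> 1"
    using cheb_T_mono[OF q1, of "n - 1"] by auto
  moreover have "Suc (n - 1) = n" using n3 by simp
  ultimately show ?thesis unfolding TT_def by simp
qed

lemma sc_in: "i \<in> {1..n} \<Longrightarrow> sc i \<in> {1..n}" using n3 by (auto simp: sc_def)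
lemma pr_in: "i \<in> {1..n} \<Longrightarrow> pr i \<in> {1..n}" using n3 by (auto simp: pr_def)
lemma sc_pr: "i \<in> {1..n} \<Longrightarrow> sc i \<noteq> pr i" using n3 by (auto simp: sc_def pr_def)

lemma w_cyc:
  assumes i: "i \<in> {1..n}" and k: "k \<in> {1..n+1}"
  shows "w i k * \<phi> k = (if k = sc i then c * \<phi> k else 0) + (if k = pr i then c * \<phi> k else 0)
            + (if k = n + 1 then a * \<phi> k else 0)"
proof -
  have m1: "i mod n + 1 = sc i" using i by (auto simp: sc_def)
  have m2: "k \<in> {1..n} \<Longrightarrow> (i = k mod n + 1) = (k = pr i)" using i n3
    by (cases "k = n") (auto simp: pr_def)
  show ?thesis
  proof (cases "k = n + 1")
    case True then show ?thesis using i sc_in[OF i] pr_in[OF i] by (auto simp: wheel_cond_def)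
  next
    case False
    then have kk: "k \<in> {1..n}" using k by auto
    then show ?thesis using m1 m2 sc_pr[OF i] i False unfolding wheel_cond_def by auto
  qed
qed

lemma sum_w:
  assumes i: "i \<in> {1..n}"
  shows "(\<Sum>k\<in>{1..n+1}. w i k * \<phi> k) = c * \<phi> (sc i) + c * \<phi> (pr i) + a * \<phi> (n + 1)"
proof -
  have "(\<Sum>k\<in>{1..n+1}. w i k * \<phi> k) = (\<Sum>k\<in>{1..n+1}. (if k = sc i then c * \<phi> k else 0) + (if k = pr i then c * \<phi> k else 0)
            + (if k = n + 1 then a * \<phi> k else 0))"
    by (rule sum.cong) (auto simp: w_cyc[OF i])
  also have "\<dots> = c * \<phi> (sc i) + c * \<phi> (pr i) + a * \<phi> (n + 1)"
    using sc_in[OF i] pr_in[OF i] by (simp add: sum.distrib sum.delta)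
  finally show ?thesis .
qed

lemma sum_w_hub: "(\<Sum>k\<in>{1..n+1}. w (n+1) k * \<phi> k) = a * (\<Sum>k\<in>{1..n}. \<phi> k)"
proof -
  have "(\<Sum>k\<in>{1..n+1}. w (n+1) k * \<phi> k) = (\<Sum>k\<in>{1..n}. w (n+1) k * \<phi> k) + w (n+1) (n+1) * \<phi> (n+1)"
    by (simp add: sum.cl_ivl_Suc)
  also have "\<dots> = (\<Sum>k\<in>{1..n}. a * \<phi> k)"
    by (auto simp: wheel_cond_def intro!: sum.cong)
  finally show ?thesis by (simp add: sum_distrib_left)
qed

lemma w_diag: "w i i = 0"
proof -
  have "i \<in> {1..n} \<Longrightarrow> i \<noteq> i mod n + 1" using n3 by (cases "i = n") auto
  then show ?thesis by (auto simp: wheel_cond_def)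
qed
lemma w_sym: "w i j = w j i" by (auto simp: wheel_cond_def)

lemma ff_sym: "k \<le> n \<Longrightarrow> ff (n - k) = ff k" by (simp add: ff_def)

lemma Wf_rec': "k \<ge> 1 \<Longrightarrow> Wf q (k + 1) = 2 * q * Wf q k - Wf q (k - 1)"
  using Wf_rec[of q "k - 1"] by (simp add: Suc_diff_le)

lemma ff_rec: assumes "1 \<le> d" "d \<le> n - 1" shows "2 * q * ff d - ff (d + 1) - ff (d - 1) = 0"
proof -
  have a1: "Wf q (d + 1) = 2 * q * Wf q d - Wf q (d - 1)" using assms by (intro Wf_rec') auto
  have a2: "Wf q (n - d + 1) = 2 * q * Wf q (n - d) - Wf q (n - d - 1)" using assms by (intro Wf_rec') auto
  have e1: "n - (d + 1) = n - d - 1" "n - (d - 1) = n - d + 1" using assms by auto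
  show ?thesis unfolding ff_def e1 a1 a2 by (simp add: algebra_simps)
qed

lemma ff_0: "2 * q * ff 0 - ff 1 - ff (n - 1) = 2 * (TT - 1)"
proof -
  have a1: "Wf q (n + 1) = 2 * q * Wf q n - Wf q (n - 1)" using n3 by (intro Wf_rec') auto
  have a2: "Wf q (Suc (Suc (n - 1))) - Wf q (n - 1) = 2 * cheb_T (Suc (n - 1)) q" by (rule Wf_diff)
  have e: "Suc (Suc (n - 1)) = n + 1" "Suc (n - 1) = n" "n - (n - 1) = 1" using n3 by auto
  show ?thesis using a1 a2 unfolding ff_def e TT_def by simp
qed

lemma key:
  assumes i: "i \<in> {1..n}" and j: "j \<in> {1..n}"
  shows "2 * q * ff (ds i j) - ff (ds (sc i) j) - ff (ds (pr i) j) = (if i = j then 2 * (TT - 1) else 0)"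
proof -
  have s1: "ff (n - 1) = ff 1" using ff_sym[of 1] n3 by simp
  consider "i = j" | "j < i" | "i < j" by arith
  then show ?thesis
  proof cases
    case 1
    have "ff (ds (sc i) j) = ff 1" using 1 i s1 by (auto simp: ds_def sc_def)
    moreover have "ff (ds (pr i) j) = ff 1" using 1 i s1 by (auto simp: ds_def pr_def)
    moreover have "ds i j = 0" using 1 by (simp add: ds_def)
    ultimately show ?thesis using ff_0 s1 1 by simp
  next
    case 2
    define d where "d = i - j"
    have d: "1 \<le> d" "d \<le> n - 1" using 2 i j by (auto simp: d_def)
    have "ff (ds (sc i) j) = ff (d + 1)"
    proof (cases "i = n")
      case True
      then have "ds (sc i) j = n - (d + 1)" using 2 j by (auto simp: ds_def sc_def d_def)
      then show ?thesis using ff_sym[of "d + 1"] d n3 by simp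
    next
      case False
      then have p: "sc i = i + 1" by (simp add: sc_def)
      have "ds (i + 1) j = d + 1" using 2 i unfolding ds_def d_def by auto
      then show ?thesis using p by simp
    qed
    moreover have "ff (ds (pr i) j) = ff (d - 1)" using 2 i j by (auto simp: ds_def pr_def d_def)
    moreover have "ds i j = d" using 2 by (simp add: ds_def d_def)
    ultimately show ?thesis using ff_rec[OF d] 2 by simp
  next
    case 3
    define d where "d = j - i"
    have d: "1 \<le> d" "d \<le> n - 1" using 3 i j by (auto simp: d_def)
    have "ff (ds (pr i) j) = ff (d + 1)"
    proof (cases "i = 1")
      case True
      then have "ds (pr i) j = n - (d + 1)" using 3 j by (auto simp: ds_def pr_def d_def)
      then show ?thesis using ff_sym[of "d + 1"] d n3 by simp
    next
      case False
      then have p: "pr i = i - 1" by (simp add: pr_def)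
      have "ds (i - 1) j = d + 1" using 3 i unfolding ds_def d_def by auto
      then show ?thesis using p by simp
    qed
    moreover have "ff (ds (sc i) j) = ff (d - 1)" using 3 i j by (auto simp: ds_def sc_def d_def)
    moreover have "ds i j = d" using 3 by (simp add: ds_def d_def)
    ultimately show ?thesis using ff_rec[OF d] 3 by simp
  qed
qed

end

lemma id_gen:
  fixes m :: real assumes "m > 0"
  shows "- (m + 1) / m^2 - (- 1 / m^2) = - 1 / m"
    and "1 - (m - 1) / m + (m - 1) * (- 1 / m^2) = 1 / m^2"
    and "- 1 / m^2 - (m - 1) / m^2 = 0 - 1 / m"
    and "m * ((m - 1) * (- (m + 1) / m^2) + (m - 1) / m^2) = - (m - 1)"
    and "m * (- 1 / m^2) = 0 - 1 / m"
    and "(m - 1) * ((m - 1) / m^2) - (m - 1) * (- 1 / m^2) = 1 - 1 / m"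
  using assms apply (simp_all add: field_simps power2_eq_square)
  done

lemma id1: "- (real n + 2) / (real n + 1)^2 - (- 1 / (real n + 1)^2) = - 1 / real (n + 1)"
proof -
  have e: "real n + 2 = (real n + 1) + 1" "real (n + 1) = real n + 1" by simp_all
  show ?thesis unfolding e by (rule id_gen(1)) simp
qed
lemma id2: "1 - real n / real (n + 1) + real n * (- 1 / (real n + 1)^2) = 1 / (real n + 1)^2"
proof -
  have e: "real n = (real n + 1) - 1" "real (n + 1) = real n + 1" by simp_all
  have "1 - ((real n + 1) - 1) / (real n + 1) + ((real n + 1) - 1) * (- 1 / (real n + 1)^2) = 1 / (real n + 1)^2"
    by (rule id_gen(2)) simp
  then show ?thesis by (simp add: add.commute)
qed
lemma id3: "- 1 / (real n + 1)^2 - real n / (real n + 1)^2 = 0 - 1 / real (n + 1)"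
proof -
  have "- 1 / (real n + 1)^2 - ((real n + 1) - 1) / (real n + 1)^2 = 0 - 1 / (real n + 1)"
    by (rule id_gen(3)) simp
  then show ?thesis by simp
qed

context wh begin

lemma G_cyc: "i \<in> {1..n} \<Longrightarrow> j \<in> {1..n} \<Longrightarrow> G i j = \<beta> * ff (ds i j) + \<kappa>"
  by (simp add: G_def)

lemma a_kappa: "a * \<kappa> = - (real n + 2) / (real n + 1)^2" using apos by (simp add: \<kappa>_def)
lemma a_hh: "a * hh = - 1 / (real n + 1)^2" using apos by (simp add: hh_def)
lemma a_ee: "a * ee = real n / (real n + 1)^2" using apos by (simp add: ee_def)
lemma npos: "real n + 1 > 0" by simp

lemma loc_alg:
  fixes A C Q b F0 F1 F2 k h' :: real
  assumes "2 * C + A = C * (2 * Q)"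
  shows "(2 * C + A) * (b * F0 + k) - C * (b * F1 + k) - C * (b * F2 + k) - A * h'
     = b * C * (2 * Q * F0 - F1 - F2) + (A * k - A * h')"
proof -
  have AE: "A = C * (2 * Q) - 2 * C" using assms by simp
  show ?thesis unfolding AE by (simp add: algebra_simps)
qed

lemma loc:
  assumes i: "i \<in> {1..n}" and j: "j \<in> {1..n}"
  shows "(2 * c + a) * G i j - c * G (sc i) j - c * G (pr i) j - a * hh = (if i = j then 1 else 0) - 1 / real (n + 1)"
proof -
  have h: "2 * c + a = c * (2 * q)" using cpos qdef by (simp add: field_simps)
  have "(2 * c + a) * G i j - c * G (sc i) j - c * G (pr i) j - a * hh
     = \<beta> * c * (2 * q * ff (ds i j) - ff (ds (sc i) j) - ff (ds (pr i) j)) + (a * \<kappa> - a * hh)"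
    unfolding G_cyc[OF i j] G_cyc[OF sc_in[OF i] j] G_cyc[OF pr_in[OF i] j]
    by (rule loc_alg[OF h])
  also have "\<dots> = \<beta> * c * (if i = j then 2 * (TT - 1) else 0) + (a * \<kappa> - a * hh)"
    by (simp only: key[OF i j])
  also have "\<dots> = (if i = j then 1 else 0) - 1 / real (n + 1)"
  proof -
    have b1: "\<beta> * c * (2 * (TT - 1)) = 1" using TT1 cpos by (simp add: \<beta>_def field_simps)
    have b2: "a * \<kappa> - a * hh = - 1 / real (n + 1)"
      unfolding a_kappa a_hh by (rule id1)
    have b1': "\<beta> * c * (2 * TT - 2) = 1" using b1 by (simp add: algebra_simps)
    show ?thesis by (cases "i = j") (simp_all add: b1' b2)
  qed
  finally show ?thesis .
qed

lemma sc_bij: "bij_betw sc {1..n} {1..n}"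
proof -
  have "inj_on sc {1..n}" by (auto simp: inj_on_def sc_def split: if_splits)
  moreover have "sc ` {1..n} = {1..n}"
  proof
    show "sc ` {1..n} \<subseteq> {1..n}" using sc_in by auto
    show "{1..n} \<subseteq> sc ` {1..n}"
    proof
      fix x assume x: "x \<in> {1..n}"
      show "x \<in> sc ` {1..n}"
      proof (cases "x = 1")
        case True then have "x = sc n" using n3 by (simp add: sc_def)
        then show ?thesis using n3 by auto
      next
        case False then have "x = sc (x - 1)" using x n3 by (auto simp: sc_def)
        then show ?thesis by (rule image_eqI) (use x False in auto)
      qed
    qed
  qed
  ultimately show ?thesis by (simp add: bij_betw_def)
qed

lemma pr_bij: "bij_betw pr {1..n} {1..n}"
proof -
  have "inj_on pr {1..n}" by (auto simp: inj_on_def pr_def split: if_splits)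
  moreover have "pr ` {1..n} = {1..n}"
  proof
    show "pr ` {1..n} \<subseteq> {1..n}" using pr_in by auto
    show "{1..n} \<subseteq> pr ` {1..n}"
    proof
      fix x assume x: "x \<in> {1..n}"
      show "x \<in> pr ` {1..n}"
      proof (cases "x = n")
        case True then have "x = pr 1" using n3 by (simp add: pr_def)
        then show ?thesis using n3 by auto
      next
        case False then have "x = pr (x + 1)" using x n3 by (auto simp: pr_def)
        then show ?thesis by (rule image_eqI) (use x False in auto)
      qed
    qed
  qed
  ultimately show ?thesis by (simp add: bij_betw_def)
qed

lemma colsum:
  assumes j: "j \<in> {1..n}"
  shows "(\<Sum>k\<in>{1..n}. G k j) = - hh"
proof -
  have s1: "(\<Sum>k\<in>{1..n}. G (sc k) j) = (\<Sum>k\<in>{1..n}. G k j)"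
    using sum.reindex_bij_betw[OF sc_bij, of "\<lambda>k. G k j"] by simp
  have s2: "(\<Sum>k\<in>{1..n}. G (pr k) j) = (\<Sum>k\<in>{1..n}. G k j)"
    using sum.reindex_bij_betw[OF pr_bij, of "\<lambda>k. G k j"] by simp
  have cong: "(\<Sum>k\<in>{1..n}. (2 * c + a) * G k j - c * G (sc k) j - c * G (pr k) j - a * hh)
      = (\<Sum>k\<in>{1..n}. (if k = j then 1 else 0) - 1 / real (n + 1))"
    by (intro sum.cong refl loc) (use j in auto)
  have A: "(\<Sum>k\<in>{1..n}. (2 * c + a) * G k j - c * G (sc k) j - c * G (pr k) j - a * hh)
     = (2 * c + a) * (\<Sum>k\<in>{1..n}. G k j) - c * (\<Sum>k\<in>{1..n}. G (sc k) j) - c * (\<Sum>k\<in>{1..n}. G (pr k) j) - real n * (a * hh)"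
    by (simp add: sum_subtractf sum_distrib_left)
  have B: "(\<Sum>k\<in>{1..n}. (if k = j then 1 else 0) - 1 / real (n + 1)) = 1 - real n / real (n + 1)"
    using j by (simp add: sum_subtractf)
  have C: "(2 * c + a) * (\<Sum>k\<in>{1..n}. G k j) - c * (\<Sum>k\<in>{1..n}. G k j) - c * (\<Sum>k\<in>{1..n}. G k j) - real n * (a * hh)
     = 1 - real n / real (n + 1)"
    using cong unfolding A B s1 s2 .
  then have "a * (\<Sum>k\<in>{1..n}. G k j) = 1 - real n / real (n + 1) + real n * (a * hh)"
    by (simp add: algebra_simps)
  also have "\<dots> = 1 / (real n + 1)^2" unfolding a_hh by (rule id2)
  finally show ?thesis using apos by (simp add: hh_def field_simps)
qed

lemma colsum_full:
  assumes j: "j \<in> {1..n+1}"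
  shows "(\<Sum>k\<in>{1..n+1}. G k j) = 0"
proof (cases "j = n + 1")
  case True
  have "(\<Sum>k\<in>{1..n+1}. G k j) = (\<Sum>k\<in>{1..n}. G k j) + G (n+1) j" by (simp add: sum.cl_ivl_Suc)
  also have "(\<Sum>k\<in>{1..n}. G k j) = (\<Sum>k\<in>{1..n}. hh)" using True by (intro sum.cong) (auto simp: G_def)
  finally show ?thesis using True apos by (simp add: G_def hh_def ee_def field_simps)
next
  case False
  then have j': "j \<in> {1..n}" using j by auto
  have "(\<Sum>k\<in>{1..n+1}. G k j) = (\<Sum>k\<in>{1..n}. G k j) + G (n+1) j" by (simp add: sum.cl_ivl_Suc)
  then show ?thesis using colsum[OF j'] j' by (simp add: G_def)
qed

lemma G_sym: "G i j = G j i"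
  by (auto simp: G_def ds_def)

lemma deg_cyc: "i \<in> {1..n} \<Longrightarrow> (\<Sum>m\<in>{1..n+1}. w i m) = 2 * c + a"
  using sum_w[of i "\<lambda>_. 1"] by simp
lemma deg_hub: "(\<Sum>m\<in>{1..n+1}. w (n+1) m) = real n * a"
  using sum_w_hub[of "\<lambda>_. 1"] by simp

abbreviation "L \<equiv> laplacian (n+1) w"

lemma LG:
  assumes i: "i \<in> {1..n+1}" and j: "j \<in> {1..n+1}"
  shows "matmul (n+1) L G i j = P i j"
proof -
  have m: "matmul (n+1) L G i j = (\<Sum>m\<in>{1..n+1}. w i m) * G i j - (\<Sum>k\<in>{1..n+1}. w i k * G k j)"
    unfolding matmul_def by (rule lap_row[OF i w_diag])
  show ?thesis
  proof (cases "i = n + 1")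
    case False
    then have i': "i \<in> {1..n}" using i by auto
    note m' = m[unfolded deg_cyc[OF i'] sum_w[OF i', of "\<lambda>k. G k j"]]
    show ?thesis
    proof (cases "j = n + 1")
      case False
      then have j': "j \<in> {1..n}" using j by auto
      have "G (n+1) j = hh" using j' by (simp add: G_def)
      then show ?thesis using m' loc[OF i' j'] by (simp add: P_def algebra_simps)
    next
      case True
      have "G i j = hh" "G (sc i) j = hh" "G (pr i) j = hh" "G (n+1) j = ee"
        using True i' sc_in[OF i'] pr_in[OF i'] by (auto simp: G_def)
      then have "matmul (n+1) L G i j = (2 * c + a) * hh - (c * hh + c * hh + a * ee)" using m' True by simp
      also have "\<dots> = a * hh - a * ee" by (simp add: algebra_simps)
      also have "\<dots> = P i j"
      proof -
        have "P i j = 0 - 1 / real (n + 1)" using True i' by (simp add: P_def)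
        then show ?thesis unfolding a_hh a_ee by (simp only: id3)
      qed
      finally show ?thesis .
    qed
  next
    case True
    note m' = m[unfolded True deg_hub sum_w_hub]
    show ?thesis
    proof (cases "j = n + 1")
      case False
      then have j': "j \<in> {1..n}" using j by auto
      have "G (n+1) j = hh" using j' by (simp add: G_def)
      then have "matmul (n+1) L G i j = real n * a * hh - a * (- hh)" using m' colsum[OF j'] True by simp
      also have "\<dots> = (real n + 1) * (a * hh)" by (simp add: algebra_simps)
      also have "\<dots> = P i j" unfolding a_hh using True False id_gen(5)[of "real n + 1"] by (simp add: P_def)
      finally show ?thesis .
    next
      case jT: True
      have "(\<Sum>k\<in>{1..n}. G k j) = (\<Sum>k\<in>{1..n}. hh)" using jT by (intro sum.cong) (auto simp: G_def)
      moreover have "G (n+1) j = ee" using jT by (simp add: G_def)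
      ultimately have "matmul (n+1) L G i j = real n * a * ee - a * (\<Sum>k\<in>{1..n}. hh)" using m' True by simp
      also have "\<dots> = real n * (a * ee) - real n * (a * hh)" by (simp add: algebra_simps)
      also have "\<dots> = (real n + 1 - 1) * ((real n + 1 - 1) / (real n + 1)^2) - (real n + 1 - 1) * (- 1 / (real n + 1)^2)"
        unfolding a_ee a_hh by simp
      also have "\<dots> = 1 - 1 / (real n + 1)" by (rule id_gen(6)) simp
      also have "\<dots> = P i j" using True jT by (simp add: P_def)
      finally show ?thesis .
    qed
  qed
qed

lemma L_sym: "L i j = L j i"
  by (simp add: laplacian_def w_sym)

lemma GL:
  assumes i: "i \<in> {1..n+1}" and j: "j \<in> {1..n+1}"
  shows "matmul (n+1) G L i j = P i j"
proof -
  have "matmul (n+1) G L i j = matmul (n+1) L G j i"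
    unfolding matmul_def by (intro sum.cong refl) (metis G_sym L_sym mult.commute)
  then show ?thesis using LG[OF j i] by (simp add: P_def)
qed

lemma L_colsum: "j \<in> {1..n+1} \<Longrightarrow> (\<Sum>k\<in>{1..n+1}. L k j) = 0"
proof -
  assume j: "j \<in> {1..n+1}"
  have "(\<Sum>k\<in>{1..n+1}. L k j) = (\<Sum>k\<in>{1..n+1}. L j k * 1)" by (rule sum.cong[OF refl]) (metis L_sym mult_1_right)
  also have "\<dots> = 0" by (subst lap_row[OF j w_diag]) simp
  finally show ?thesis .
qed

lemma G_out: "i \<notin> {1..n+1} \<or> j \<notin> {1..n+1} \<Longrightarrow> G i j = 0"
  by (auto simp: G_def)

lemma is_gi: "is_group_inverse (n+1) L G"
  unfolding is_group_inverse_def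
proof (intro conjI ballI allI impI)
  fix i j assume i: "i \<in> {1..n+1}" and j: "j \<in> {1..n+1}"
  have "matmul (n+1) (matmul (n+1) L G) L i j = (\<Sum>k\<in>{1..n+1}. P i k * L k j)"
    unfolding matmul_def[of _ "matmul (n+1) L G"]
  proof (rule sum.cong[OF refl])
    fix k assume "k \<in> {1..n+1}" then show "matmul (n + 1) L G i k * L k j = P i k * L k j" using LG[OF i] by simp
  qed
  also have "\<dots> = L i j" unfolding P_def using P_row[OF i, of "\<lambda>k. L k j"] L_colsum[OF j] by simp
  finally show "matmul (n+1) (matmul (n+1) L G) L i j = L i j" .
  have "matmul (n+1) (matmul (n+1) G L) G i j = (\<Sum>k\<in>{1..n+1}. P i k * G k j)"
    unfolding matmul_def[of _ "matmul (n+1) G L"]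
  proof (rule sum.cong[OF refl])
    fix k assume "k \<in> {1..n+1}" then show "matmul (n + 1) G L i k * G k j = P i k * G k j" using GL[OF i] by simp
  qed
  also have "\<dots> = G i j" unfolding P_def using P_row[OF i, of "\<lambda>k. G k j"] colsum_full[OF j] by simp
  finally show "matmul (n+1) (matmul (n+1) G L) G i j = G i j" .
  show "matmul (n+1) L G i j = matmul (n+1) G L i j" using LG[OF i j] GL[OF i j] by simp
next
  fix i j :: nat assume "i \<notin> {1..n+1} \<or> j \<notin> {1..n+1}"
  then show "G i j = 0" by (rule G_out)
qed

lemma gi_eq: "group_inverse (n+1) L = G"
  unfolding group_inverse_def
  apply (rule the_equality)
   apply (rule is_gi)
  apply (erule group_inverse_unique[OF _ is_gi])
  done

lemma gi_eq2: "group_inverse (Suc n) (laplacian (Suc n) w) = G" using gi_eq by simp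

lemma kirch: "kirchhoff_index (n+1) w = real (n+1) * (\<Sum>i\<in>{1..n+1}. G i i)"
proof -
  have z: "(\<Sum>i\<in>{1..n+1}. \<Sum>j\<in>{1..n+1}. G i j) = 0"
    by (subst sum.swap) (intro sum.neutral ballI colsum_full)
  have "kirchhoff_index (n+1) w = (1/2) * (\<Sum>i\<in>{1..n+1}. \<Sum>j\<in>{1..n+1}. G i i + G j j - 2 * G i j)"
    by (simp add: kirchhoff_index_def eff_resistance_def gi_eq2 Let_def)
  also have "\<dots> = (1/2) * (real (n+1) * (\<Sum>i\<in>{1..n+1}. G i i) + real (n+1) * (\<Sum>i\<in>{1..n+1}. G i i)
         - 2 * (\<Sum>i\<in>{1..n+1}. \<Sum>j\<in>{1..n+1}. G i j))"
    by (simp add: sum.distrib sum_subtractf sum_distrib_left[symmetric] sum_distrib_right[symmetric])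
  finally show ?thesis using z by simp
qed

lemma trace: "(\<Sum>i\<in>{1..n+1}. G i i) = real n * (\<beta> * cheb_U (n - 1) q + \<kappa>) + ee"
proof -
  have "(\<Sum>i\<in>{1..n+1}. G i i) = (\<Sum>i\<in>{1..n}. G i i) + G (n+1) (n+1)" by (simp add: sum.cl_ivl_Suc)
  also have "(\<Sum>i\<in>{1..n}. G i i) = (\<Sum>i\<in>{1..n}. \<beta> * cheb_U (n - 1) q + \<kappa>)"
    using n3 by (intro sum.cong) (auto simp: G_def ds_def ff_def Wf_def)
  finally show ?thesis by (simp add: G_def)
qed

end

lemma final_alg:
  fixes A c p T U V :: real and n :: nat
  assumes "c > 0" "p > 0" "T > 1" "V = T - p * U" "A = 2 * c * p"
  shows "- (1 / (2 * c)) * ((real n + 1) / (T - 1)) *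
        ((A * real n / (6 * c) - real n + 1) * U
         + (2 * c / A + real n / 3) * (V - 1))
     + 1 / A + real n * (real n + 1) / (6 * c)
   = real n * (real n + 1) * U / (2 * c * (T - 1)) - real n / A"
proof -
  have t: "T - 1 \<noteq> 0" using assms by simp
  show ?thesis unfolding assms(4,5) using assms(1,2) t
    by (simp add: field_simps)
qed

theorem corollary3p2:
  fixes n :: nat and a c q :: real
  assumes "n \<ge> 3" and "a > 0" and "c > 0"
    and "q = a / (2 * c) + 1"
  shows "kirchhoff_index (n + 1) (wheel_cond n a c) =
     - (1 / (2 * c)) * ((real n + 1) / (cheb_T n q - 1)) *
        ((a * real n / (6 * c) - real n + 1) * cheb_U (n - 1) q
         + (2 * c / a + real n / 3) * (cheb_V (n - 1) q - 1))
     + 1 / a + real n * (real n + 1) / (6 * c)"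
proof -
  interpret wh n a c q using assms by unfold_locales auto
  have K: "kirchhoff_index (n + 1) (wheel_cond n a c)
      = real (n + 1) * (real n * (\<beta> * cheb_U (n - 1) q + \<kappa>) + ee)"
    using kirch trace by simp
  have L1: "real (n + 1) * (real n * (\<beta> * cheb_U (n - 1) q + \<kappa>) + ee)
     = real n * (real n + 1) * cheb_U (n - 1) q / (2 * c * (cheb_T n q - 1)) - real n / a"
  proof -
    have t: "cheb_T n q - 1 \<noteq> 0" using TT1 by (simp add: TT_def)
    have g: "(real n + 1) * ((real n + 1 - 1) * (- (real n + 1 + 1) / (real n + 1)^2) + (real n + 1 - 1) / (real n + 1)^2)
       = - (real n + 1 - 1)" by (rule id_gen(4)) simp
    have "a * (real (n + 1) * (real n * \<kappa> + ee)) = real (n + 1) * (real n * (a * \<kappa>) + a * ee)"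
      by (simp add: algebra_simps)
    also have "\<dots> = - real n" unfolding a_kappa a_ee using g by (simp add: add.commute)
    finally have k1: "real (n + 1) * (real n * \<kappa> + ee) = - real n / a" using apos by (simp add: field_simps)
    have k2: "real (n + 1) * (real n * (\<beta> * cheb_U (n - 1) q)) = real n * (real n + 1) * cheb_U (n - 1) q / (2 * c * (cheb_T n q - 1))"
      using t cpos by (simp add: \<beta>_def TT_def field_simps)
    have "real (n + 1) * (real n * (\<beta> * cheb_U (n - 1) q + \<kappa>) + ee)
        = real (n + 1) * (real n * (\<beta> * cheb_U (n - 1) q)) + real (n + 1) * (real n * \<kappa> + ee)"
      by (simp add: algebra_simps)
    also have "\<dots> = real n * (real n + 1) * cheb_U (n - 1) q / (2 * c * (cheb_T n q - 1)) - real n / a"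
      unfolding k1 k2 by simp
    finally show ?thesis .
  qed
  have V: "cheb_V (n - 1) q = cheb_T n q - (q - 1) * cheb_U (n - 1) q"
    using cheb_TV[of "n - 1" q] assms(1) by simp
  have R: "- (1 / (2 * c)) * ((real n + 1) / (cheb_T n q - 1)) *
        ((a * real n / (6 * c) - real n + 1) * cheb_U (n - 1) q
         + (2 * c / a + real n / 3) * (cheb_V (n - 1) q - 1))
     + 1 / a + real n * (real n + 1) / (6 * c)
     = real n * (real n + 1) * cheb_U (n - 1) q / (2 * c * (cheb_T n q - 1)) - real n / a"
    by (rule final_alg[OF cpos _ _ V acq]) (use q1 TT1 in \<open>auto simp: TT_def\<close>)
  show ?thesis by (simp only: K L1 R)
qed


end
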